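(* There exists a constant $0<c'<1$ such that for all integers $m\ge1$, $n>2m$ and all $\sigma_1^2,\dots,\sigma_n^2>0$, $\mathrm{Ent}(\sigma^2_L)\ge c'\,\mathrm{Ent}(\sigma^2_{G^{r}})-c'\ln(2)$, where $L\subset G^{r}$ with $|L|=2m$ consists of $2m$ arms of $G^{r}$ with the largest variances.
   Context: For a positive vector $a$, $\mathrm{Ent}(a)=-\sum_i\hat a_i\ln\hat a_i$ with $\hat a_i=a_i/\sum_ja_j$; $\sigma^2_S=(\sigma_i^2)_{i\in S}$. Let $\underline\sigma^2=\min_i\sigma_i^2$, $G_j=\{i\in[n]:2^{j-1}\le\sigma_i^2/\underline\sigma^2<2^j\}$ for $j=1,\dots,k$ covering $[n]$. $G'_j=G_j$ if $|G_j|\le2m$, otherwise $G'_j\subset G_j$ with $|G'_j|=2m$; $G^{r}=\bigcup_jG'_j$, the choices made to maximize $\mathrm{Ent}(\sigma^2_{G^{r}})$. *)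

theory Defs
  imports Complex_Main
begin

definition Ent :: "('a \<Rightarrow> real) \<Rightarrow> 'a set \<Rightarrow> real" where
  "Ent a S = - (\<Sum>i\<in>S. (a i / sum a S) * ln (a i / sum a S))"

definition min_var :: "(nat \<Rightarrow> real) \<Rightarrow> nat \<Rightarrow> real" where
  "min_var v n = Min (v ` {1..n})"

definition grp :: "(nat \<Rightarrow> real) \<Rightarrow> nat \<Rightarrow> nat \<Rightarrow> nat set" where
  "grp v n j = {i \<in> {1..n}. (2::real) ^ (j - 1) \<le> v i / min_var v n \<and> v i / min_var v n < 2 ^ j}"

(* R is a possible G^r: R = union of G'_j, where G'_j = G_j if |G_j| \<le> 2m,
   otherwise G'_j \<subseteq> G_j with |G'_j| = 2m *)
definition admissible_Gr :: "(nat \<Rightarrow> real) \<Rightarrow> nat \<Rightarrow> nat \<Rightarrow> nat set \<Rightarrow> bool" where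
  "admissible_Gr v n m R \<longleftrightarrow> R \<subseteq> {1..n} \<and>
     (\<forall>j\<ge>1. (card (grp v n j) \<le> 2 * m \<longrightarrow> R \<inter> grp v n j = grp v n j) \<and>
            (2 * m < card (grp v n j) \<longrightarrow> card (R \<inter> grp v n j) = 2 * m))"

definition is_Gr :: "(nat \<Rightarrow> real) \<Rightarrow> nat \<Rightarrow> nat \<Rightarrow> nat set \<Rightarrow> bool" where
  "is_Gr v n m R \<longleftrightarrow> admissible_Gr v n m R \<and>
     (\<forall>R'. admissible_Gr v n m R' \<longrightarrow> Ent v R' \<le> Ent v R)"

definition is_top :: "(nat \<Rightarrow> real) \<Rightarrow> nat \<Rightarrow> nat set \<Rightarrow> nat set \<Rightarrow> bool" where
  "is_top v m R L \<longleftrightarrow> L \<subseteq> R \<and> card L = 2 * m \<and> (\<forall>i\<in>L. \<forall>j\<in>R - L. v j \<le> v i)"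

end

theory Submission
  imports Defs
begin


lemma ent_alt:
  assumes "finite S" "\<forall>i\<in>S. 0 < a i" "S \<noteq> {}"
  shows "Ent a S = (\<Sum>i\<in>S. a i * ln (sum a S / a i)) / sum a S"
proof -
  have sp: "sum a S > 0" using assms by (simp add: sum_pos)
  have "Ent a S = (\<Sum>i\<in>S. - ((a i / sum a S) * ln (a i / sum a S)))"
    unfolding Ent_def by (simp add: sum_negf)
  also have "\<dots> = (\<Sum>i\<in>S. a i * ln (sum a S / a i) / sum a S)"
  proof (rule sum.cong)
    fix i assume "i \<in> S"
    then have "a i > 0" using assms by auto
    then show "- ((a i / sum a S) * ln (a i / sum a S)) = a i * ln (sum a S / a i) / sum a S"
      using sp by (simp add: ln_div minus_divide_left right_diff_distrib diff_divide_distrib)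
  qed simp
  also have "\<dots> = (\<Sum>i\<in>S. a i * ln (sum a S / a i)) / sum a S"
    by (simp add: sum_divide_distrib)
  finally show ?thesis .
qed

lemma elem_bound:
  fixes x t S :: real
  assumes "0 < x" "x \<le> t" "t \<le> S"
  shows "x * ln (S / x) \<le> sqrt (x * t) * (ln (S / t) + 2)"
proof -
  have tp: "t > 0" using assms by linarith
  have l1: "ln (S / x) = ln (S / t) + ln (t / x)"
    using assms tp by (simp add: ln_div)
  have x_le: "x \<le> sqrt (x * t)"
  proof -
    have "x * x \<le> x * t" using assms by (simp add: mult_left_mono)
    then have "sqrt (x * x) \<le> sqrt (x * t)" by (rule real_sqrt_le_mono)
    then show ?thesis using assms by simp
  qed
  have lnSt: "ln (S / t) \<ge> 0" using assms tp by simp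
  have A: "x * ln (S / t) \<le> sqrt (x * t) * ln (S / t)"
    using x_le lnSt by (simp add: mult_right_mono)
  have q: "sqrt (t / x) > 0" using assms tp by simp
  have "ln (t / x) = 2 * ln (sqrt (t / x))" using assms tp by (simp add: ln_sqrt)
  also have "\<dots> \<le> 2 * (sqrt (t / x) - 1)" using ln_le_minus_one[OF q] by simp
  also have "\<dots> \<le> 2 * sqrt (t / x)" by simp
  finally have B0: "x * ln (t / x) \<le> x * (2 * sqrt (t / x))"
    using assms by (simp add: mult_left_mono)
  have eq: "x * sqrt (t / x) = sqrt (x * t)"
  proof -
    have "x = sqrt (x * x)" using assms by simp
    then have "x * sqrt (t / x) = sqrt (x * x * (t / x))"
      by (metis real_sqrt_mult)
    also have "x * x * (t / x) = x * t" using assms by (simp add: field_simps)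
    finally show ?thesis .
  qed
  have B: "x * ln (t / x) \<le> 2 * sqrt (x * t)" using B0 eq by simp
  show ?thesis using A B l1 by (simp add: algebra_simps)
qed

lemma mono_lnp1:
  fixes a b :: real
  assumes "1 \<le> a" "a \<le> b"
  shows "(ln b + 1) / b \<le> (ln a + 1) / a"
proof -
  define r where "r = b / a"
  have r1: "r \<ge> 1" using assms by (simp add: r_def field_simps)
  have b: "b = a * r" using assms by (simp add: r_def)
  have "ln b = ln a + ln r" using assms r1 b by (simp add: ln_mult)
  have "ln r \<le> r - 1" using ln_le_minus_one r1 by simp
  have "ln a \<ge> 0" using assms by simp
  then have "a * (ln b + 1) \<le> b * (ln a + 1)"
    using \<open>ln b = ln a + ln r\<close> \<open>ln r \<le> r - 1\<close> b assms r1
  proof -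
    have "a * (ln b + 1) = a * ln a + a * (ln r + 1)" using \<open>ln b = ln a + ln r\<close> by (simp add: algebra_simps)
    also have "\<dots> \<le> a * ln a + a * r" using \<open>ln r \<le> r - 1\<close> assms by (simp add: mult_left_mono)
    also have "\<dots> \<le> a * r * ln a + a * r" using r1 \<open>ln a \<ge> 0\<close> assms
      by (simp add: mult_right_mono)
    also have "\<dots> = b * (ln a + 1)" using b by (simp add: algebra_simps)
    finally show ?thesis .
  qed
  then show ?thesis using assms by (simp add: field_simps)
qed

lemma ln2_ge: "ln (2::real) \<ge> 1/2"
proof -
  have "ln (1/2::real) \<le> 1/2 - 1" using ln_le_minus_one[of "1/2::real"] by simp
  then show ?thesis by (simp add: ln_div)
qed

lemma small_term:
  fixes t v s :: real
  assumes "0 < t" "t \<le> v" "4 * v \<le> s"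
  shows "t * ln (s / t) \<le> v * ln (s / v)"
proof -
  have vp: "v > 0" using assms by linarith
  have sp: "s > 0" using assms vp by linarith
  have "ln (s / t) = ln (s / v) + ln (v / t)" using assms vp sp by (simp add: ln_div)
  have l4: "ln (4::real) \<ge> 1"
  proof -
    have "ln (2 * 2::real) = ln 2 + ln 2" using ln_mult[of "2::real" 2] by simp
    then have "ln (4::real) = 2 * ln 2" by simp
    then show ?thesis using ln2_ge by simp
  qed
  have "4 \<le> s / v" using assms vp by (simp add: field_simps)
  then have "ln 4 \<le> ln (s / v)" by simp
  then have g1: "ln (s / v) \<ge> 1" using l4 by simp
  have "ln (v / t) \<le> v / t - 1" using ln_le_minus_one assms vp by simp
  then have "t * ln (v / t) \<le> t * (v / t - 1)" using assms by (simp add: mult_left_mono)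
  also have "\<dots> = v - t" using assms by (simp add: field_simps)
  finally have a: "t * ln (v / t) \<le> v - t" .
  have b: "(v - t) * 1 \<le> (v - t) * ln (s / v)" using g1 assms by (intro mult_left_mono) auto
  have "t * ln (s / t) = t * ln (s / v) + t * ln (v / t)" using \<open>ln (s / t) = _\<close> by (simp add: algebra_simps)
  also have "\<dots> \<le> t * ln (s / v) + (v - t) * ln (s / v)" using a b by simp
  also have "\<dots> = v * ln (s / v)" by (simp add: algebra_simps)
  finally show ?thesis .
qed

lemma ent_lower:
  fixes v :: "nat \<Rightarrow> real"
  assumes fin: "finite L" and cardL: "card L = 2*m" and m1: "1 \<le> m" and tpos: "0 < t"
    and tle: "\<forall>i\<in>L. t \<le> v i" and i0: "i0 \<in> L" "v i0 = t"
  shows "real m * (t * ln (sum v L / t)) \<le> 2 * (\<Sum>i\<in>L. v i * ln (sum v L / v i))"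
proof -
  define s where "s = sum v L"
  have vpos: "\<forall>i\<in>L. 0 < v i" using tle tpos by fastforce
  have vle: "\<forall>i\<in>L. v i \<le> s" unfolding s_def using fin vpos
    by (auto intro!: member_le_sum simp: less_imp_le)
  have sp: "s > 0" using vle vpos i0 by fastforce
  have nonneg: "\<forall>i\<in>L. 0 \<le> v i * ln (s / v i)"
  proof
    fix i assume "i \<in> L"
    then have "v i > 0" "v i \<le> s" using vle vpos by auto
    then have "1 \<le> s / v i" by simp
    then have "ln (s / v i) \<ge> 0" by simp
    then show "0 \<le> v i * ln (s / v i)" using \<open>v i > 0\<close> by simp
  qed
  define f where "f = t * ln (s / t)"
  have f0: "f \<ge> 0" using nonneg i0 unfolding f_def by metis
  define B where "B = {i\<in>L. s < 4 * v i}"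
  have finB: "finite B" using fin B_def by simp
  have cardB: "card B \<le> 3"
  proof (rule ccontr)
    assume "\<not> card B \<le> 3"
    then have c4: "card B \<ge> 4" by simp
    have Bne: "B \<noteq> {}" using c4 by auto
    have "(\<Sum>i\<in>B. s / 4) < sum v B"
      using finB Bne B_def by (intro sum_strict_mono) auto
    then have "real (card B) * (s / 4) < sum v B" by simp
    moreover have "sum v B \<le> s" unfolding s_def
      using fin vpos B_def by (intro sum_mono2) auto
    moreover have "real (card B) * (s / 4) \<ge> 4 * (s / 4)"
      using c4 sp by (intro mult_right_mono) auto
    ultimately show False by simp
  qed
  have S1: "(\<Sum>i\<in>L. v i * ln (s / v i)) \<ge> f"
  proof -
    have "(\<Sum>i\<in>{i0}. v i * ln (s / v i)) \<le> (\<Sum>i\<in>L. v i * ln (s / v i))"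
      using fin i0 nonneg by (intro sum_mono2) auto
    then show ?thesis using i0 unfolding f_def by simp
  qed
  have S2: "(\<Sum>i\<in>L. v i * ln (s / v i)) \<ge> real (2 * m - 3) * f"
  proof -
    have cLB: "card (L - B) \<ge> 2 * m - 3"
      using card_Diff_subset[of B L] finB cardB cardL B_def by auto
    have "real (2 * m - 3) * f \<le> real (card (L - B)) * f"
      using cLB f0 by (intro mult_right_mono) auto
    also have "\<dots> \<le> (\<Sum>i\<in>L - B. v i * ln (s / v i))"
    proof (rule sum_bounded_below)
      fix i assume "i \<in> L - B"
      then have "i \<in> L" "4 * v i \<le> s" unfolding B_def by auto
      then show "f \<le> v i * ln (s / v i)" unfolding f_def
        using small_term[of t "v i" s] tle tpos by auto
    qed
    also have "\<dots> \<le> (\<Sum>i\<in>L. v i * ln (s / v i))"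
      using fin nonneg by (intro sum_mono2) auto
    finally show ?thesis .
  qed
  have "real m * f \<le> 2 * (\<Sum>i\<in>L. v i * ln (s / v i))"
  proof (cases "m \<ge> 3")
    case True
    then have "real m \<le> real (2 * m - 3)" by simp
    then have "real m * f \<le> real (2 * m - 3) * f" using f0 by (intro mult_right_mono)
    then show ?thesis using S2 S1 f0 by linarith
  next
    case False
    then have "real m \<le> 2" by simp
    then have "real m * f \<le> 2 * f" using f0 by (intro mult_right_mono)
    then show ?thesis using S1 by linarith
  qed
  then show ?thesis unfolding s_def f_def .
qed

lemma geom_bound:
  fixes w :: real assumes "w > 1"
  shows "(\<Sum>j\<in>{1..J}. w ^ j) \<le> w ^ (J + 1) / (w - 1)"
proof (induction J)
  case 0 then show ?case using assms by simp
next
  case (Suc J)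
  have "(\<Sum>j\<in>{1..Suc J}. w ^ j) = (\<Sum>j\<in>{1..J}. w ^ j) + w ^ Suc J" by simp
  also have "\<dots> \<le> w ^ (J + 1) / (w - 1) + w ^ Suc J" using Suc by simp
  also have "\<dots> = w ^ (Suc J + 1) / (w - 1)" using assms by (simp add: field_simps)
  finally show ?case .
qed

lemma ex_grp:
  fixes y :: real assumes "1 \<le> y"
  shows "\<exists>k::nat. 1 \<le> k \<and> 2 ^ (k - 1) \<le> y \<and> y < 2 ^ k"
proof -
  define k0 where "k0 = nat \<lfloor>log 2 y\<rfloor>"
  have lg: "log 2 y \<ge> 0" using assms by simp
  have rk: "real k0 = of_int \<lfloor>log 2 y\<rfloor>" unfolding k0_def using lg by simp
  have ypow: "2 powr (log 2 y) = y" using assms by simp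
  have "(2::real) ^ k0 = 2 powr (real k0)" by (simp add: powr_realpow)
  also have "\<dots> \<le> 2 powr (log 2 y)" using rk by (intro powr_mono) auto
  finally have a: "(2::real) ^ k0 \<le> y" using ypow by simp
  have "y = 2 powr (log 2 y)" using ypow by simp
  also have "\<dots> < 2 powr (real k0 + 1)" using rk by (intro powr_less_mono) linarith+
  also have "\<dots> = 2 ^ (k0 + 1)" using powr_realpow[of 2 "k0 + 1"] by (simp add: add.commute)
  finally have b: "y < 2 ^ (k0 + 1)" .
  show ?thesis using a b by (intro exI[of _ "k0 + 1"]) simp
qed

lemma group_sum:
  fixes v :: "nat \<Rightarrow> real" and gi :: "nat \<Rightarrow> nat" and \<mu> t :: real
  assumes finA: "finite A" and mu: "\<mu> > 0" and tpos: "t > 0"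
   and gA: "\<forall>i\<in>A. 1 \<le> gi i \<and> 2 ^ (gi i - 1) \<le> v i / \<mu> \<and> v i / \<mu> < 2 ^ (gi i) \<and> v i \<le> t \<and> 0 < v i"
   and J1: "1 \<le> J" and J2: "2 ^ (J - 1) \<le> t / \<mu>" and J3: "t / \<mu> < 2 ^ J"
   and cardb: "\<forall>j. card {i\<in>A. gi i = j} \<le> 2 * m"
  shows "(\<Sum>i\<in>A. sqrt (v i * t)) \<le> 10 * real m * t"
proof -
  define w :: real where "w = sqrt 2"
  have w1: "w > 1" unfolding w_def by simp
  have w14: "w \<ge> 1.4"
    unfolding w_def by (rule real_le_rsqrt) (simp add: power2_eq_square)
  have gle: "\<forall>i\<in>A. gi i \<le> J"
  proof
    fix i assume "i \<in> A"
    then have "(2::real) ^ (gi i - 1) \<le> v i / \<mu>" "v i \<le> t" using gA by auto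
    moreover have "v i / \<mu> \<le> t / \<mu>" using \<open>v i \<le> t\<close> mu by (simp add: divide_right_mono)
    ultimately have "(2::real) ^ (gi i - 1) < 2 ^ J" using J3 by linarith
    then have "gi i - 1 < J" by simp
    then show "gi i \<le> J" using \<open>i \<in> A\<close> gA by auto
  qed
  have each: "\<forall>i\<in>A. sqrt (v i * t) \<le> t * w ^ (gi i) / w ^ (J - 1)"
  proof
    fix i assume iA: "i \<in> A"
    define g where "g = gi i"
    have vp: "v i > 0" and vl: "v i < 2 ^ g * \<mu>" using gA iA mu by (auto simp: g_def field_simps)
    have tl: "2 ^ (J - 1) * \<mu> \<le> t" using J2 mu by (simp add: field_simps)
    have "v i * (2 ^ (J - 1) * \<mu>) \<le> v i * t" using tl vp by (intro mult_left_mono) auto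
    also have "\<dots> \<le> 2 ^ g * \<mu> * t" using vl tpos by (intro mult_right_mono) auto
    finally have "(v i * 2 ^ (J - 1)) * \<mu> \<le> (2 ^ g * t) * \<mu>" by (simp add: algebra_simps)
    then have a: "v i * 2 ^ (J - 1) \<le> 2 ^ g * t" using mu by simp
    have "v i * t \<le> t * t * 2 ^ g / 2 ^ (J - 1)"
      using a tpos by (simp add: field_simps)
    then have "sqrt (v i * t) \<le> sqrt (t * t * 2 ^ g / 2 ^ (J - 1))" by (rule real_sqrt_le_mono)
    also have "\<dots> = t * w ^ g / w ^ (J - 1)"
      using tpos by (simp add: w_def real_sqrt_mult real_sqrt_divide real_sqrt_power)
    finally show "sqrt (v i * t) \<le> t * w ^ (gi i) / w ^ (J - 1)" by (simp add: g_def)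
  qed
  have "(\<Sum>i\<in>A. sqrt (v i * t)) = (\<Sum>j\<in>{1..J}. \<Sum>i\<in>{i\<in>A. gi i = j}. sqrt (v i * t))"
    using gle gA finA by (intro sum.group[symmetric]) auto
  also have "\<dots> \<le> (\<Sum>j\<in>{1..J}. 2 * real m * t * w ^ j / w ^ (J - 1))"
  proof (rule sum_mono)
    fix j assume "j \<in> {1..J}"
    have "(\<Sum>i\<in>{i\<in>A. gi i = j}. sqrt (v i * t)) \<le> (\<Sum>i\<in>{i\<in>A. gi i = j}. t * w ^ j / w ^ (J - 1))"
      using each by (intro sum_mono) auto
    also have "\<dots> = real (card {i\<in>A. gi i = j}) * (t * w ^ j / w ^ (J - 1))" by simp
    also have "\<dots> \<le> real (2 * m) * (t * w ^ j / w ^ (J - 1))"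
    proof (rule mult_right_mono)
      show "real (card {i\<in>A. gi i = j}) \<le> real (2 * m)" using cardb of_nat_mono by blast
      show "0 \<le> t * w ^ j / w ^ (J - 1)" using tpos w1 by simp
    qed
    finally show "(\<Sum>i\<in>{i\<in>A. gi i = j}. sqrt (v i * t)) \<le> 2 * real m * t * w ^ j / w ^ (J - 1)"
      by simp
  qed
  also have "\<dots> = (2 * real m * t / w ^ (J - 1)) * (\<Sum>j\<in>{1..J}. w ^ j)"
    by (simp add: sum_distrib_left)
  also have "\<dots> \<le> (2 * real m * t / w ^ (J - 1)) * (w ^ (J + 1) / (w - 1))"
    using geom_bound[OF w1, of J] tpos w1 by (intro mult_left_mono) auto
  also have "\<dots> = 2 * real m * t * (w * w) / (w - 1)"
  proof -
    have e: "J + 1 = (J - 1) + 2" using J1 by simp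
    have "w ^ (J + 1) = w ^ (J - 1) * (w * w)" unfolding e power_add by (simp add: power2_eq_square)
    then show ?thesis using w1 by (simp add: field_simps)
  qed
  also have "\<dots> = 4 * real m * t / (w - 1)" by (simp add: w_def)
  also have "\<dots> \<le> 10 * real m * t"
  proof -
    have mt: "real m * t \<ge> 0" using tpos by simp
    have "4 * (real m * t) \<le> (10 * (w - 1)) * (real m * t)" using w14
      by (intro mult_right_mono[OF _ mt]) simp
    then have "4 * real m * t \<le> 10 * real m * t * (w - 1)" by (simp add: algebra_simps)
    then show ?thesis using w1 by (simp add: field_simps)
  qed
  finally show ?thesis .
qed

lemma core:
  fixes v :: "nat \<Rightarrow> real"
  assumes m1: "1 \<le> m" and vpos: "\<forall>i\<in>{1..n}. 0 < v i"
    and adm: "admissible_Gr v n m R" and top: "is_top v m R L"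
  shows "Ent v R \<le> 200 * Ent v L"
proof -
  have Rsub: "R \<subseteq> {1..n}" using adm unfolding admissible_Gr_def by blast
  have finR: "finite R" using Rsub finite_subset by blast
  have LR: "L \<subseteq> R" and cardL: "card L = 2 * m"
    and topv: "\<forall>i\<in>L. \<forall>j\<in>R - L. v j \<le> v i" using top unfolding is_top_def by auto
  have finL: "finite L" using LR finR finite_subset by blast
  have Lne: "L \<noteq> {}" using cardL m1 by auto
  have vR: "\<forall>i\<in>R. 0 < v i" using Rsub vpos by auto
  have vL: "\<forall>i\<in>L. 0 < v i" using LR vR by auto
  define t where "t = Min (v ` L)"
  have "t \<in> v ` L" unfolding t_def using Min_in[of "v ` L"] finL Lne by auto
  then obtain i0 where i0: "i0 \<in> L" "v i0 = t" by auto
  have tle: "\<forall>i\<in>L. t \<le> v i" unfolding t_def using finL by simp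
  have tpos: "t > 0" using i0 vL by auto
  have RLt: "\<forall>i\<in>R - L. v i \<le> t" using topv i0 by auto
  define s where "s = sum v L"
  define S where "S = sum v R"
  define PL where "PL = (\<Sum>i\<in>L. v i * ln (s / v i))"
  define PR where "PR = (\<Sum>i\<in>R. v i * ln (S / v i))"
  have EL: "Ent v L = PL / s" unfolding PL_def s_def using ent_alt[OF finL vL Lne] .
  have Rne: "R \<noteq> {}" using LR Lne by auto
  have ER: "Ent v R = PR / S" unfolding PR_def S_def using ent_alt[OF finR vR Rne] .
  have s2: "2 * real m * t \<le> s"
  proof -
    have "real (card L) * t \<le> s" unfolding s_def using tle by (intro sum_bounded_below) auto
    then show ?thesis using cardL by simp
  qed
  have m2t: "t \<le> 2 * real m * t"
  proof -
    have "1 \<le> 2 * real m" using m1 by simp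
    then have "t * 1 \<le> t * (2 * real m)" using tpos by (intro mult_left_mono) auto
    then show ?thesis by (simp add: algebra_simps)
  qed
  have sp: "s > 0" using s2 m2t tpos by linarith
  have SsRL: "S = s + sum v (R - L)" unfolding S_def s_def
    using sum.subset_diff[OF LR finR, of v] by linarith
  have RLnn: "sum v (R - L) \<ge> 0" using vR by (intro sum_nonneg) auto
  have sS: "s \<le> S" using SsRL RLnn by simp
  have Sp: "S > 0" using sp sS by simp
  define \<mu> where "\<mu> = min_var v n"
  have nne: "{1..n} \<noteq> {}" using Rsub Rne by auto
  have mu_le: "\<forall>i\<in>{1..n}. \<mu> \<le> v i" unfolding \<mu>_def min_var_def by simp
  have mupos: "\<mu> > 0" unfolding \<mu>_def min_var_def using Min_in[of "v ` {1..n}"] nne vpos by auto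
  have "\<forall>i\<in>{1..n}. \<exists>k::nat. 1 \<le> k \<and> 2 ^ (k - 1) \<le> v i / \<mu> \<and> v i / \<mu> < 2 ^ k"
  proof
    fix i assume "i \<in> {1..n}"
    then have "1 \<le> v i / \<mu>" using mu_le mupos by simp
    then show "\<exists>k::nat. 1 \<le> k \<and> 2 ^ (k - 1) \<le> v i / \<mu> \<and> v i / \<mu> < 2 ^ k" by (rule ex_grp)
  qed
  then obtain gi where gi: "\<forall>i\<in>{1..n}. 1 \<le> gi i \<and> 2 ^ (gi i - 1) \<le> v i / \<mu> \<and> v i / \<mu> < 2 ^ gi i"
    by metis
  have ingrp: "\<forall>i\<in>{1..n}. i \<in> grp v n (gi i)" using gi unfolding grp_def \<mu>_def by auto
  have Q: "(\<Sum>i\<in>R - L. sqrt (v i * t)) \<le> 10 * real m * t"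
  proof (rule group_sum[where \<mu> = \<mu> and gi = gi and J = "gi i0"])
    show "finite (R - L)" using finR by simp
    show "\<mu> > 0" by (rule mupos)
    show "t > 0" by (rule tpos)
    show "\<forall>i\<in>R - L. 1 \<le> gi i \<and> 2 ^ (gi i - 1) \<le> v i / \<mu> \<and> v i / \<mu> < 2 ^ (gi i) \<and> v i \<le> t \<and> 0 < v i"
      using gi RLt vR Rsub by blast
    have i0n: "i0 \<in> {1..n}" using i0 LR Rsub by auto
    show "1 \<le> gi i0" "2 ^ (gi i0 - 1) \<le> t / \<mu>" "t / \<mu> < 2 ^ gi i0" using gi i0n i0 by auto
    show "\<forall>j. card {i\<in>R - L. gi i = j} \<le> 2 * m"
    proof
      fix j
      show "card {i\<in>R - L. gi i = j} \<le> 2 * m"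
      proof (cases "j \<ge> 1")
        case False
        have "{i\<in>R - L. gi i = j} = {}" using gi Rsub False by fastforce
        then have "card {i\<in>R - L. gi i = j} = 0" by (simp only: card.empty)
        then show ?thesis by linarith
      next
        case True
        have sub: "{i\<in>R - L. gi i = j} \<subseteq> R \<inter> grp v n j" using ingrp Rsub by fastforce
        have fg: "finite (grp v n j)" unfolding grp_def by simp
        have cc: "(card (grp v n j) \<le> 2 * m \<longrightarrow> R \<inter> grp v n j = grp v n j) \<and>
            (2 * m < card (grp v n j) \<longrightarrow> card (R \<inter> grp v n j) = 2 * m)"
          using adm True unfolding admissible_Gr_def by blast
        have "card (R \<inter> grp v n j) \<le> 2 * m"
          using cc by (cases "card (grp v n j) \<le> 2 * m") auto
        then show ?thesis using card_mono[OF _ sub] finR by (meson finite_Int le_trans)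
      qed
    qed
  qed
  define Qs where "Qs = (\<Sum>i\<in>R - L. sqrt (v i * t))"
  have tS: "t \<le> S" using sS s2 m2t by linarith
  have X: "(\<Sum>i\<in>R - L. v i * ln (S / v i)) \<le> (ln (S / t) + 2) * Qs"
  proof -
    have "(\<Sum>i\<in>R - L. v i * ln (S / v i)) \<le> (\<Sum>i\<in>R - L. sqrt (v i * t) * (ln (S / t) + 2))"
      using elem_bound RLt vR tS by (intro sum_mono) auto
    also have "\<dots> = (ln (S / t) + 2) * Qs" unfolding Qs_def
      by (simp add: sum_distrib_left mult.commute)
    finally show ?thesis .
  qed
  have mass: "sum v (R - L) \<le> Qs"
  proof -
    have "sum v (R - L) \<le> (\<Sum>i\<in>R - L. sqrt (v i * t))"
    proof (rule sum_mono)
      fix i assume iR: "i \<in> R - L"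
      then have "v i * v i \<le> v i * t" using RLt vR by (intro mult_left_mono) auto
      then have "sqrt (v i * v i) \<le> sqrt (v i * t)" by (rule real_sqrt_le_mono)
      then show "v i \<le> sqrt (v i * t)" using vR iR by simp
    qed
    then show ?thesis unfolding Qs_def .
  qed
  have PLsplit: "(\<Sum>i\<in>L. v i * ln (S / v i)) = s * ln (S / s) + PL"
  proof -
    have "(\<Sum>i\<in>L. v i * ln (S / v i)) = (\<Sum>i\<in>L. v i * ln (S / s) + v i * ln (s / v i))"
    proof (rule sum.cong)
      fix i assume "i \<in> L"
      then have "v i > 0" using vL by auto
      then have "ln (S / v i) = ln (S / s) + ln (s / v i)" using sp Sp by (simp add: ln_div)
      then show "v i * ln (S / v i) = v i * ln (S / s) + v i * ln (s / v i)" by (simp add: algebra_simps)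
    qed simp
    then show ?thesis unfolding PL_def s_def by (simp add: sum.distrib sum_distrib_right)
  qed
  have sln: "s * ln (S / s) \<le> Qs"
  proof -
    have "ln (S / s) \<le> S / s - 1" using ln_le_minus_one sp Sp by simp
    then have "s * ln (S / s) \<le> s * (S / s - 1)" using sp by (simp add: mult_left_mono)
    also have "\<dots> = sum v (R - L)" using sp SsRL by (simp add: field_simps)
    finally show ?thesis using mass by simp
  qed
  have PRsplit: "PR = (\<Sum>i\<in>L. v i * ln (S / v i)) + (\<Sum>i\<in>R - L. v i * ln (S / v i))"
    unfolding PR_def using sum.subset_diff[OF LR finR] by (simp add: add.commute)
  define a where "a = s / t"
  define b where "b = S / t"
  have a2: "a \<ge> 2"
  proof -
    have "1 \<le> real m" using m1 by simp
    then have "t * 1 \<le> t * real m" using tpos by (intro mult_left_mono) auto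
    then have "2 * t \<le> s" using s2 by (simp add: algebra_simps)
    then show ?thesis unfolding a_def using tpos by (simp add: le_divide_eq)
  qed
  have ab: "a \<le> b" unfolding a_def b_def using sS tpos by (simp add: divide_right_mono)
  have lnb: "ln b \<ge> 0" using a2 ab by simp
  have lna: "ln a \<ge> 1/2"
  proof -
    have "ln 2 \<le> ln a" using a2 by simp
    then show ?thesis using ln2_ge by simp
  qed
  have Qs0: "Qs \<ge> 0" unfolding Qs_def using vR tpos by (intro sum_nonneg) auto
  have Qb: "Qs \<le> 10 * real m * t" using Q unfolding Qs_def .
  have step1: "PR \<le> PL + 10 * real m * t * (ln b + 3)"
  proof -
    have "PR \<le> PL + Qs + (ln b + 2) * Qs" using PRsplit PLsplit X sln unfolding b_def by simp
    also have "\<dots> = PL + Qs * (ln b + 3)" by (simp add: algebra_simps)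
    also have "\<dots> \<le> PL + 10 * real m * t * (ln b + 3)" using Qb lnb Qs0
      by (simp add: mult_right_mono)
    finally show ?thesis .
  qed
  have lowL: "real m * (t * ln a) \<le> 2 * PL"
    unfolding a_def PL_def s_def using ent_lower[OF finL cardL m1 tpos tle i0] .
  have step2: "t * (ln b + 3) \<le> 9 * S * ln a / a"
  proof -
    have "t * (ln b + 3) \<le> 3 * t * (ln b + 1)" using lnb tpos by (simp add: algebra_simps)
    also have "\<dots> = 3 * S * ((ln b + 1) / b)" unfolding b_def using tpos Sp by (simp add: field_simps)
    also have "\<dots> \<le> 3 * S * ((ln a + 1) / a)" using mono_lnp1[of a b] a2 ab Sp
      by (intro mult_left_mono) auto
    also have "\<dots> \<le> 3 * S * (3 * ln a / a)" using lna a2 Sp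
      by (intro mult_left_mono divide_right_mono) auto
    finally show ?thesis by simp
  qed
  have step3: "real m * (9 * S * ln a / a) \<le> 18 * (S / s) * PL"
  proof -
    have "real m * (9 * S * ln a / a) = 9 * (S / s) * (real m * (t * ln a))"
      unfolding a_def using tpos sp by (simp add: field_simps)
    also have "\<dots> \<le> 9 * (S / s) * (2 * PL)" using lowL Sp sp by (intro mult_left_mono) auto
    finally show ?thesis by simp
  qed
  have "real m * (t * ln a) \<ge> 0" using tpos lna by simp
  then have PL0: "PL \<ge> 0" using lowL by linarith
  have "PR \<le> PL + 10 * (real m * (t * (ln b + 3)))" using step1 by (simp add: algebra_simps)
  also have "\<dots> \<le> PL + 10 * (real m * (9 * S * ln a / a))"
  proof -
    have "real m * (t * (ln b + 3)) \<le> real m * (9 * S * ln a / a)"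
      using step2 by (intro mult_left_mono) auto
    then show ?thesis by linarith
  qed
  also have "\<dots> \<le> PL + 180 * (S / s) * PL" using step3 by simp
  finally have "PR \<le> PL + 180 * (S / s) * PL" .
  then have "PR / S \<le> PL / S + 180 * (PL / s)" using Sp by (simp add: field_simps)
  also have "PL / S \<le> PL / s" using PL0 sp sS by (simp add: divide_left_mono)
  finally have "PR / S \<le> 181 * (PL / s)" by simp
  also have "\<dots> \<le> 200 * (PL / s)" using PL0 sp by (intro mult_right_mono) (auto simp: divide_nonneg_pos)
  finally show ?thesis using EL ER by simp
qed


theorem lemma10:
  shows "\<exists>c'::real. 0 < c' \<and> c' < 1 \<and>
    (\<forall>(m::nat) (n::nat) (v::nat \<Rightarrow> real) R L.
       1 \<le> m \<longrightarrow> 2 * m < n \<longrightarrow> (\<forall>i\<in>{1..n}. 0 < v i) \<longrightarrow>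
       is_Gr v n m R \<longrightarrow> is_top v m R L \<longrightarrow>
       Ent v L \<ge> c' * Ent v R - c' * ln 2)"
proof (rule exI[of _ "1/200"], intro conjI allI impI)
  fix m n :: nat and v :: "nat \<Rightarrow> real" and R L
  assume "1 \<le> m" "2 * m < n" "\<forall>i\<in>{1..n}. 0 < v i" "is_Gr v n m R" "is_top v m R L"
  then have "Ent v R \<le> 200 * Ent v L" using core unfolding is_Gr_def by blast
  moreover have "ln (2::real) \<ge> 0" by simp
  ultimately show "Ent v L \<ge> 1/200 * Ent v R - 1/200 * ln 2" by linarith
qed simp_all

end
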